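(* Let $-D/2\le x_C<x_B\le D/2$. For $m\in\{B,C\}$ let $r_2^m(r_1)$ denote the boundary function of $\mathcal{C}_f(x_m)$, i.e. $r_2^m(r_1)=\max\{r_2:(r_1,r_2)\in\mathcal{C}_f(x_m)\}$ for $0\le r_1\le r_{1,\max}^m$, where $r_{k,\max}^m=\log_2(1+\bar P h_k(x_m))$. Then the curves $r_2^B(r_1)$ and $r_2^C(r_1)$ have exactly one intersection point $(\bar r_1^{BC},\bar r_2^{BC})$, and it satisfies $0<\bar r_1^{BC}<r_{1,\max}^B$ and $0<\bar r_2^{BC}<r_{2,\max}^C$. Furthermore, $r_2^B(r_1)>r_2^C(r_1)$ for $0\le r_1<\bar r_1^{BC}$, and $r_2^B(r_1)<r_2^C(r_1)$ for $\bar r_1^{BC}<r_1\le r_{1,\max}^B$.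
   Context: Fix $D>0$, $H>0$, $\beta_0>0$, $\bar P>0$. Ground users GU 1, GU 2 are at horizontal positions $x_1=-D/2$, $x_2=D/2$; for a UAV at horizontal position $x$ (altitude $H$), $h_k(x)=\beta_0/((x-x_k)^2+H^2)$. For $p_1,p_2\ge0$, $\mathcal{C}_{\rm MAC}(x,p_1,p_2)$ is the set of $(r_1,r_2)$, $r_1,r_2\ge0$, with $r_1\le\log_2(1+p_1h_1(x))$, $r_2\le\log_2(1+p_2h_2(x))$, $r_1+r_2\le\log_2(1+p_1h_1(x)+p_2h_2(x))$; the fixed-location capacity region is $\mathcal{C}_f(x)=\bigcup_{p_1,p_2\ge0,\,p_1+p_2\le\bar P}\mathcal{C}_{\rm MAC}(x,p_1,p_2)$. *)

theory Defs
  imports Complex_Main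
begin

text \<open>Channel gain from a UAV at horizontal position x (altitude H) to GU k,
  where GU 1 is at -D/2 and GU 2 at D/2.\<close>
definition gu_pos :: "real \<Rightarrow> nat \<Rightarrow> real" where
  "gu_pos D k = (if k = 1 then - D / 2 else D / 2)"

definition gain :: "real \<Rightarrow> real \<Rightarrow> real \<Rightarrow> nat \<Rightarrow> real \<Rightarrow> real" where
  "gain D H \<beta>0 k x = \<beta>0 / ((x - gu_pos D k)\<^sup>2 + H\<^sup>2)"

definition C_MAC :: "real \<Rightarrow> real \<Rightarrow> real \<Rightarrow> real \<Rightarrow> real \<Rightarrow> real \<Rightarrow> (real \<times> real) set" where
  "C_MAC D H \<beta>0 x p1 p2 = {(r1, r2). r1 \<ge> 0 \<and> r2 \<ge> 0 \<and>
      r1 \<le> log 2 (1 + p1 * gain D H \<beta>0 1 x) \<and>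
      r2 \<le> log 2 (1 + p2 * gain D H \<beta>0 2 x) \<and>
      r1 + r2 \<le> log 2 (1 + p1 * gain D H \<beta>0 1 x + p2 * gain D H \<beta>0 2 x)}"

definition C_f :: "real \<Rightarrow> real \<Rightarrow> real \<Rightarrow> real \<Rightarrow> real \<Rightarrow> (real \<times> real) set" where
  "C_f D H \<beta>0 P x = (\<Union>p1 \<in> {0..}. \<Union>p2 \<in> {0..}.
      if p1 + p2 \<le> P then C_MAC D H \<beta>0 x p1 p2 else {})"

definition boundary :: "real \<Rightarrow> real \<Rightarrow> real \<Rightarrow> real \<Rightarrow> real \<Rightarrow> real \<Rightarrow> real" where
  "boundary D H \<beta>0 P x r1 = (GREATEST r2. (r1, r2) \<in> C_f D H \<beta>0 P x)"

definition rmax :: "real \<Rightarrow> real \<Rightarrow> real \<Rightarrow> real \<Rightarrow> nat \<Rightarrow> real \<Rightarrow> real" where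
  "rmax D H \<beta>0 P k x = log 2 (1 + P * gain D H \<beta>0 k x)"

end

theory Submission
  imports Defs
begin

definition Fb :: "real \<Rightarrow> real \<Rightarrow> real \<Rightarrow> real \<Rightarrow> real" where
  "Fb g1 g2 P a = g2 * (g1 * P - a) / (g1 + min g1 g2 * a)"

lemma core:
  fixes g1 g2 P a b :: real
  assumes g1: "g1 > 0" and g2: "g2 > 0" and a: "a \<ge> 0" and b: "b \<ge> 0"
  shows "(\<exists>p1 p2. p1 \<ge> 0 \<and> p2 \<ge> 0 \<and> p1 + p2 \<le> P \<and> a \<le> p1 * g1 \<and> b \<le> p2 * g2
           \<and> (1 + a) * (1 + b) \<le> 1 + p1 * g1 + p2 * g2) \<longleftrightarrow> b \<le> Fb g1 g2 P a"
proof (cases "g1 \<le> g2")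
  case True
  hence m: "min g1 g2 = g1" by simp
  have den: "g1 + g1 * a > 0" using g1 a by (simp add: add_pos_nonneg)
  have F: "b \<le> Fb g1 g2 P a \<longleftrightarrow> b * (g1 + g1 * a) \<le> g2 * (g1 * P - a)"
    unfolding Fb_def m using den by (simp add: pos_le_divide_eq)
  show ?thesis
  proof
    assume "\<exists>p1 p2. p1 \<ge> 0 \<and> p2 \<ge> 0 \<and> p1 + p2 \<le> P \<and> a \<le> p1 * g1 \<and> b \<le> p2 * g2
           \<and> (1 + a) * (1 + b) \<le> 1 + p1 * g1 + p2 * g2"
    then obtain p1 p2 where h: "p1 \<ge> 0" "p2 \<ge> 0" "p1 + p2 \<le> P" "a \<le> p1 * g1" "b \<le> p2 * g2"
      "(1 + a) * (1 + b) \<le> 1 + p1 * g1 + p2 * g2" by blast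
    have ab: "a * b \<le> p1 * g1 + p2 * g2 - a - b" using h(6) by (simp add: algebra_simps)
    have "b * (g1 + g1 * a) = g1 * b + g1 * (a * b)" by (simp add: algebra_simps)
    also have "\<dots> \<le> g1 * b + g1 * (p1 * g1 + p2 * g2 - a - b)"
      using ab g1 by simp
    also have "\<dots> = g1 * (p1 * g1 - a) + g1 * (p2 * g2)" by (simp add: algebra_simps)
    also have "\<dots> \<le> g2 * (p1 * g1 - a) + g1 * (p2 * g2)"
      using True h(4) by (simp add: mult_right_mono)
    also have "\<dots> = g2 * (g1 * (p1 + p2) - a)" by (simp add: algebra_simps)
    also have "\<dots> \<le> g2 * (g1 * P - a)" using h(3) g1 g2 by simp
    finally show "b \<le> Fb g1 g2 P a" using F by simp
  next
    assume "b \<le> Fb g1 g2 P a"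
    hence c: "b * (g1 + g1 * a) \<le> g2 * (g1 * P - a)" using F by simp
    define p1 where "p1 = a / g1"
    define p2 where "p2 = P - a / g1"
    have p1g: "p1 * g1 = a" using g1 by (simp add: p1_def)
    have p2g: "p2 * g2 * g1 = g2 * (g1 * P - a)" using g1 by (simp add: p2_def field_simps)
    have "0 \<le> b * (g1 + g1 * a)" using b den by simp
    hence nn: "0 \<le> g2 * (g1 * P - a)" using c by linarith
    hence "g1 * P - a \<ge> 0" using g2 by (simp add: zero_le_mult_iff)
    hence p2: "p2 \<ge> 0" using g1 by (simp add: p2_def field_simps)
    have "b * (1 + a) * g1 \<le> p2 * g2 * g1" using c p2g by (simp add: algebra_simps)
    hence key: "b * (1 + a) \<le> p2 * g2" using g1 by simp
    have "b \<le> b * (1 + a)" using a b by (simp add: algebra_simps)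
    hence "b \<le> p2 * g2" using key by linarith
    moreover have "(1 + a) * (1 + b) \<le> 1 + p1 * g1 + p2 * g2"
      using key p1g by (simp add: algebra_simps)
    moreover have "p1 \<ge> 0" using a g1 by (simp add: p1_def)
    moreover have "p1 + p2 \<le> P" by (simp add: p1_def p2_def)
    ultimately show "\<exists>p1 p2. p1 \<ge> 0 \<and> p2 \<ge> 0 \<and> p1 + p2 \<le> P \<and> a \<le> p1 * g1 \<and> b \<le> p2 * g2
           \<and> (1 + a) * (1 + b) \<le> 1 + p1 * g1 + p2 * g2" using p2 p1g by force
  qed
next
  case False
  hence m: "min g1 g2 = g2" by simp
  have den: "g1 + g2 * a > 0" using g1 g2 a by (simp add: add_pos_nonneg)
  have F: "b \<le> Fb g1 g2 P a \<longleftrightarrow> a * (g2 + g2 * b) \<le> g1 * (g2 * P - b)"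
  proof -
    have "b \<le> Fb g1 g2 P a \<longleftrightarrow> b * (g1 + g2 * a) \<le> g2 * (g1 * P - a)"
      unfolding Fb_def m using den by (simp add: pos_le_divide_eq)
    also have "\<dots> \<longleftrightarrow> a * (g2 + g2 * b) \<le> g1 * (g2 * P - b)"
      by (simp add: algebra_simps)
    finally show ?thesis .
  qed
  have den2: "g2 + g2 * b > 0" using g2 b by (simp add: add_pos_nonneg)
  show ?thesis
  proof
    assume "\<exists>p1 p2. p1 \<ge> 0 \<and> p2 \<ge> 0 \<and> p1 + p2 \<le> P \<and> a \<le> p1 * g1 \<and> b \<le> p2 * g2
           \<and> (1 + a) * (1 + b) \<le> 1 + p1 * g1 + p2 * g2"
    then obtain p1 p2 where h: "p1 \<ge> 0" "p2 \<ge> 0" "p1 + p2 \<le> P" "a \<le> p1 * g1" "b \<le> p2 * g2"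
      "(1 + a) * (1 + b) \<le> 1 + p1 * g1 + p2 * g2" by blast
    have ab: "a * b \<le> p1 * g1 + p2 * g2 - a - b" using h(6) by (simp add: algebra_simps)
    have "a * (g2 + g2 * b) = g2 * a + g2 * (a * b)" by (simp add: algebra_simps)
    also have "\<dots> \<le> g2 * a + g2 * (p1 * g1 + p2 * g2 - a - b)"
      using ab g2 by simp
    also have "\<dots> = g2 * (p2 * g2 - b) + g2 * (p1 * g1)" by (simp add: algebra_simps)
    also have "\<dots> \<le> g1 * (p2 * g2 - b) + g2 * (p1 * g1)"
      using False h(5) by (simp add: mult_right_mono)
    also have "\<dots> = g1 * (g2 * (p1 + p2) - b)" by (simp add: algebra_simps)
    also have "\<dots> \<le> g1 * (g2 * P - b)" using h(3) g1 g2 by simp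
    finally show "b \<le> Fb g1 g2 P a" using F by simp
  next
    assume "b \<le> Fb g1 g2 P a"
    hence c: "a * (g2 + g2 * b) \<le> g1 * (g2 * P - b)" using F by simp
    define p2 where "p2 = b / g2"
    define p1 where "p1 = P - b / g2"
    have p2g: "p2 * g2 = b" using g2 by (simp add: p2_def)
    have p1g: "p1 * g1 * g2 = g1 * (g2 * P - b)" using g2 by (simp add: p1_def field_simps)
    have "0 \<le> a * (g2 + g2 * b)" using a den2 by simp
    hence nn: "0 \<le> g1 * (g2 * P - b)" using c by linarith
    hence "g2 * P - b \<ge> 0" using g1 by (simp add: zero_le_mult_iff)
    hence p1: "p1 \<ge> 0" using g2 by (simp add: p1_def field_simps)
    have "a * (1 + b) * g2 \<le> p1 * g1 * g2" using c p1g by (simp add: algebra_simps)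
    hence key: "a * (1 + b) \<le> p1 * g1" using g2 by simp
    have "a \<le> a * (1 + b)" using a b by (simp add: algebra_simps)
    hence "a \<le> p1 * g1" using key by linarith
    moreover have "(1 + a) * (1 + b) \<le> 1 + p1 * g1 + p2 * g2"
      using key p2g by (simp add: algebra_simps)
    moreover have "p2 \<ge> 0" using b g2 by (simp add: p2_def)
    moreover have "p1 + p2 \<le> P" by (simp add: p1_def p2_def)
    ultimately show "\<exists>p1 p2. p1 \<ge> 0 \<and> p2 \<ge> 0 \<and> p1 + p2 \<le> P \<and> a \<le> p1 * g1 \<and> b \<le> p2 * g2
           \<and> (1 + a) * (1 + b) \<le> 1 + p1 * g1 + p2 * g2" using p1 p2g by force
  qed
qed


lemma gain_pos: "\<beta>0 > 0 \<Longrightarrow> H > 0 \<Longrightarrow> gain D H \<beta>0 k x > 0"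
  unfolding gain_def by (simp add: add_nonneg_pos)

lemma mem_Cf:
  assumes b0: "\<beta>0 > 0" and H: "H > 0" and r1: "0 \<le> r1" and r2: "0 \<le> r2"
  shows "(r1, r2) \<in> C_f D H \<beta>0 P x \<longleftrightarrow>
     2 powr r2 - 1 \<le> Fb (gain D H \<beta>0 1 x) (gain D H \<beta>0 2 x) P (2 powr r1 - 1)"
proof -
  define g1 where "g1 = gain D H \<beta>0 1 x"
  define g2 where "g2 = gain D H \<beta>0 2 x"
  have g1: "g1 > 0" and g2: "g2 > 0" using gain_pos[OF b0 H] by (auto simp: g1_def g2_def)
  have pr: "2 powr (r1 + r2) = 2 powr r1 * 2 powr r2" by (simp add: powr_add)
  have a0: "2 powr r1 - 1 \<ge> 0" using r1 powr_le_cancel_iff[of 2 0 r1] by simp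
  have b0': "2 powr r2 - 1 \<ge> 0" using r2 powr_le_cancel_iff[of 2 0 r2] by simp
  have "(r1, r2) \<in> C_f D H \<beta>0 P x \<longleftrightarrow>
    (\<exists>p1 p2. p1 \<ge> 0 \<and> p2 \<ge> 0 \<and> p1 + p2 \<le> P \<and> r1 \<le> log 2 (1 + p1 * g1) \<and>
       r2 \<le> log 2 (1 + p2 * g2) \<and> r1 + r2 \<le> log 2 (1 + p1 * g1 + p2 * g2))"
  proof -
    have "(r1, r2) \<in> C_f D H \<beta>0 P x \<longleftrightarrow>
      (\<exists>p1\<in>{0..}. \<exists>p2\<in>{0..}. p1 + p2 \<le> P \<and> (r1, r2) \<in> C_MAC D H \<beta>0 x p1 p2)"
      unfolding C_f_def by (simp split: if_splits) blast
    thus ?thesis using r1 r2 unfolding C_MAC_def g1_def g2_def by auto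
  qed
  also have "\<dots> \<longleftrightarrow>
    (\<exists>p1 p2. p1 \<ge> 0 \<and> p2 \<ge> 0 \<and> p1 + p2 \<le> P \<and> (2 powr r1 - 1) \<le> p1 * g1 \<and>
       (2 powr r2 - 1) \<le> p2 * g2 \<and> (1 + (2 powr r1 - 1)) * (1 + (2 powr r2 - 1)) \<le> 1 + p1 * g1 + p2 * g2)"
  proof -
    have "\<And>p1 p2. p1 \<ge> 0 \<Longrightarrow> p2 \<ge> 0 \<Longrightarrow>
       (r1 \<le> log 2 (1 + p1 * g1) \<and>
       r2 \<le> log 2 (1 + p2 * g2) \<and> r1 + r2 \<le> log 2 (1 + p1 * g1 + p2 * g2)) \<longleftrightarrow>
       ((2 powr r1 - 1) \<le> p1 * g1 \<and>
       (2 powr r2 - 1) \<le> p2 * g2 \<and> (1 + (2 powr r1 - 1)) * (1 + (2 powr r2 - 1)) \<le> 1 + p1 * g1 + p2 * g2)"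
    proof -
      fix p1 p2 :: real assume p: "p1 \<ge> 0" "p2 \<ge> 0"
      have q1: "1 + p1 * g1 > 0" using p g1 by (simp add: add_pos_nonneg)
      have q2: "1 + p2 * g2 > 0" using p g2 by (simp add: add_pos_nonneg)
      have q3: "1 + p1 * g1 + p2 * g2 > 0" using p g1 g2 by (simp add: add_pos_nonneg)
      show "?thesis p1 p2"
        using le_log_iff[OF _ q1, of 2 r1] le_log_iff[OF _ q2, of 2 r2]
          le_log_iff[OF _ q3, of 2 "r1 + r2"] pr by auto
    qed
    note * = this
    show ?thesis
      apply (rule ex_cong1, rule ex_cong1)
      using * by blast
  qed
  also have "\<dots> \<longleftrightarrow> 2 powr r2 - 1 \<le> Fb g1 g2 P (2 powr r1 - 1)"
    by (rule core[OF g1 g2 a0 b0'])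
  finally show ?thesis by (simp add: g1_def g2_def)
qed

lemma bnd:
  assumes b0: "\<beta>0 > 0" and H: "H > 0" and r1: "0 \<le> r1"
    and le: "2 powr r1 - 1 \<le> gain D H \<beta>0 1 x * P"
  shows "boundary D H \<beta>0 P x r1 =
     log 2 (1 + Fb (gain D H \<beta>0 1 x) (gain D H \<beta>0 2 x) P (2 powr r1 - 1))"
proof -
  define g1 where "g1 = gain D H \<beta>0 1 x"
  define g2 where "g2 = gain D H \<beta>0 2 x"
  define a where "a = 2 powr r1 - 1"
  have g1: "g1 > 0" and g2: "g2 > 0" using gain_pos[OF b0 H] by (auto simp: g1_def g2_def)
  have a0: "a \<ge> 0" using r1 powr_le_cancel_iff[of 2 0 r1] by (simp add: a_def)
  have den: "g1 + min g1 g2 * a > 0" using g1 g2 a0 by (simp add: add_pos_nonneg)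
  have "g1 * P - a \<ge> 0" using le by (simp add: g1_def a_def algebra_simps)
  hence F0: "Fb g1 g2 P a \<ge> 0" unfolding Fb_def using g2 den by simp
  define v where "v = log 2 (1 + Fb g1 g2 P a)"
  have pos: "1 + Fb g1 g2 P a > 0" using F0 by simp
  have v0: "v \<ge> 0" unfolding v_def using F0 by simp
  have iff: "\<And>r2. (2 powr r2 - 1 \<le> Fb g1 g2 P a) \<longleftrightarrow> r2 \<le> v"
  proof -
    fix r2 :: real
    have "r2 \<le> v \<longleftrightarrow> 2 powr r2 \<le> 1 + Fb g1 g2 P a"
      unfolding v_def by (rule le_log_iff) (use pos in simp_all)
    thus "(2 powr r2 - 1 \<le> Fb g1 g2 P a) \<longleftrightarrow> r2 \<le> v" by linarith
  qed
  have "(GREATEST r2. (r1, r2) \<in> C_f D H \<beta>0 P x) = v"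
  proof (rule Greatest_equality)
    show "(r1, v) \<in> C_f D H \<beta>0 P x"
      using mem_Cf[OF b0 H r1 v0] iff[of v] by (simp add: g1_def g2_def a_def)
  next
    fix y assume y: "(r1, y) \<in> C_f D H \<beta>0 P x"
    hence "\<exists>p1\<in>{0..}. \<exists>p2\<in>{0..}. p1 + p2 \<le> P \<and> (r1, y) \<in> C_MAC D H \<beta>0 x p1 p2"
      unfolding C_f_def by (simp split: if_splits) blast
    then obtain p1 p2 where "(r1, y) \<in> C_MAC D H \<beta>0 x p1 p2" by blast
    hence "y \<ge> 0" unfolding C_MAC_def by simp
    thus "y \<le> v" using mem_Cf[OF b0 H r1, of y] y iff[of y] by (simp add: g1_def g2_def a_def)
  qed
  thus ?thesis unfolding boundary_def v_def g1_def g2_def a_def .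
qed


lemma Fb_nonneg:
  assumes "g1 > 0" "g2 > 0" "0 \<le> a" "a \<le> g1 * P"
  shows "Fb g1 g2 P a \<ge> 0"
proof -
  have den: "g1 + min g1 g2 * a > 0" using assms by (simp add: add_pos_nonneg)
  show ?thesis unfolding Fb_def using assms den by simp
qed

lemma gains:
  assumes D: "D > 0" and H: "H > 0" and b0: "\<beta>0 > 0"
    and xs: "- D / 2 \<le> xC" "xC < xB" "xB \<le> D / 2"
  shows "gain D H \<beta>0 1 xB < gain D H \<beta>0 1 xC" "gain D H \<beta>0 2 xC < gain D H \<beta>0 2 xB"
proof -
  have "(xC + D/2)^2 < (xB + D/2)^2"
    using xs by (intro power_strict_mono) auto
  hence "(xC + D/2)^2 + H^2 < (xB + D/2)^2 + H^2" by simp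
  moreover have "(xC + D/2)^2 + H^2 > 0" using H by (simp add: add_nonneg_pos)
  ultimately have "\<beta>0 / ((xB + D/2)^2 + H^2) < \<beta>0 / ((xC + D/2)^2 + H^2)"
    using b0 by (intro divide_strict_left_mono) auto
  thus "gain D H \<beta>0 1 xB < gain D H \<beta>0 1 xC" by (simp add: gain_def gu_pos_def)
  have "(D/2 - xB)^2 < (D/2 - xC)^2"
    using xs by (intro power_strict_mono) auto
  hence "(xB - D/2)^2 < (xC - D/2)^2" by (simp add: power2_commute)
  hence "(xB - D/2)^2 + H^2 < (xC - D/2)^2 + H^2" by simp
  moreover have "(xB - D/2)^2 + H^2 > 0" using H by (simp add: add_nonneg_pos)
  ultimately have "\<beta>0 / ((xC - D/2)^2 + H^2) < \<beta>0 / ((xB - D/2)^2 + H^2)"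
    using b0 by (intro divide_strict_left_mono) auto
  thus "gain D H \<beta>0 2 xC < gain D H \<beta>0 2 xB" by (simp add: gain_def gu_pos_def)
qed

lemma root_sign:
  fixes G :: "real \<Rightarrow> real" and k0 k1 k2 L :: real
  assumes G: "\<And>t. G t = k0 + k1 * t + k2 * t^2" and G0: "G 0 > 0" and GL: "G L < 0" and L: "L > 0"
  shows "\<exists>s. 0 < s \<and> s < L \<and> G s = 0 \<and> (\<forall>t. 0 \<le> t \<and> t < s \<longrightarrow> G t > 0)
           \<and> (\<forall>t. s < t \<and> t \<le> L \<longrightarrow> G t < 0)"
proof -
  have cont: "continuous_on {0..L} G"
    unfolding G by (intro continuous_intros)
  obtain s where s: "0 \<le> s" "s \<le> L" "G s = 0"
    using IVT2'[of G L 0 0, OF _ _ _ cont] G0 GL L by force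
  have s0: "s > 0" using s G0 by (cases "s = 0") auto
  have sL: "s < L" using s GL by (cases "s = L") auto
  define q where "q t = k1 + k2 * (t + s)" for t
  have fac: "G t = (t - s) * q t" for t
  proof -
    have "G t = G t - G s" using s by simp
    also have "\<dots> = (t - s) * q t" unfolding G q_def by (simp add: algebra_simps power2_eq_square)
    finally show ?thesis .
  qed
  have q0: "q 0 < 0" using G0 fac[of 0] s0 by (simp add: mult_less_0_iff zero_less_mult_iff)
  have qL: "q L < 0" using GL fac[of L] sL by (simp add: mult_less_0_iff)
  have qneg: "q t < 0" if "0 \<le> t" "t \<le> L" for t
  proof (cases "k2 \<ge> 0")
    case True
    hence "k2 * t \<le> k2 * L" using that by (simp add: mult_left_mono)
    thus ?thesis using qL unfolding q_def by (simp add: algebra_simps)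
  next
    case False
    hence "k2 * t \<le> 0" using that by (simp add: mult_nonpos_nonneg)
    thus ?thesis using q0 unfolding q_def by (simp add: algebra_simps)
  qed
  show ?thesis
  proof (intro exI conjI allI impI)
    show "0 < s" "s < L" "G s = 0" by fact+
  next
    fix t assume "0 \<le> t \<and> t < s"
    thus "G t > 0" using fac[of t] qneg[of t] sL by (simp add: mult_neg_neg)
  next
    fix t assume "s < t \<and> t \<le> L"
    thus "G t < 0" using fac[of t] qneg[of t] s0 by (simp add: mult_pos_neg)
  qed
qed


theorem lemma6:
  fixes D H \<beta>0 P xB xC :: real
  assumes "D > 0" and "H > 0" and "\<beta>0 > 0" and "P > 0"
    and "- D / 2 \<le> xC" and "xC < xB" and "xB \<le> D / 2"
  shows "\<exists>r1bar r2bar.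
     0 \<le> r1bar \<and> r1bar \<le> rmax D H \<beta>0 P 1 xB \<and>
     r2bar = boundary D H \<beta>0 P xB r1bar \<and> r2bar = boundary D H \<beta>0 P xC r1bar \<and>
     (\<forall>r1. 0 \<le> r1 \<and> r1 \<le> rmax D H \<beta>0 P 1 xB \<and>
            boundary D H \<beta>0 P xB r1 = boundary D H \<beta>0 P xC r1 \<longrightarrow> r1 = r1bar) \<and>
     0 < r1bar \<and> r1bar < rmax D H \<beta>0 P 1 xB \<and>
     0 < r2bar \<and> r2bar < rmax D H \<beta>0 P 2 xC \<and>
     (\<forall>r1. 0 \<le> r1 \<and> r1 < r1bar \<longrightarrow>
            boundary D H \<beta>0 P xB r1 > boundary D H \<beta>0 P xC r1) \<and>
     (\<forall>r1. r1bar < r1 \<and> r1 \<le> rmax D H \<beta>0 P 1 xB \<longrightarrow>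
            boundary D H \<beta>0 P xB r1 < boundary D H \<beta>0 P xC r1)"
proof -
  note D = assms(1) and H = assms(2) and b0 = assms(3) and P = assms(4)
  define a1 where "a1 = gain D H \<beta>0 1 xB"
  define a2 where "a2 = gain D H \<beta>0 2 xB"
  define c1 where "c1 = gain D H \<beta>0 1 xC"
  define c2 where "c2 = gain D H \<beta>0 2 xC"
  have pos: "a1 > 0" "a2 > 0" "c1 > 0" "c2 > 0"
    using gain_pos[OF b0 H] by (auto simp: a1_def a2_def c1_def c2_def)
  have ac1: "a1 < c1" and ac2: "c2 < a2"
    using gains[OF assms(1,2,3,5,6,7)] by (auto simp: a1_def a2_def c1_def c2_def)
  define L where "L = a1 * P"
  have L: "L > 0" using pos P by (simp add: L_def)
  define mB where "mB = min a1 a2"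
  define mC where "mC = min c1 c2"
  have mB: "mB > 0" and mC: "mC > 0" using pos by (auto simp: mB_def mC_def)
  define G where "G t = a2 * (a1 * P - t) * (c1 + mC * t) - c2 * (c1 * P - t) * (a1 + mB * t)" for t
  define k0 where "k0 = a2 * a1 * P * c1 - c2 * c1 * P * a1"
  define k1 where "k1 = a2 * (a1 * P * mC - c1) - c2 * (c1 * P * mB - a1)"
  define k2 where "k2 = c2 * mB - a2 * mC"
  have Gk: "G t = k0 + k1 * t + k2 * t^2" for t
    unfolding G_def k0_def k1_def k2_def by (simp add: algebra_simps power2_eq_square)
  have G0: "G 0 > 0"
  proof -
    have "G 0 = a1 * c1 * P * (a2 - c2)" unfolding G_def by (simp add: algebra_simps)
    thus ?thesis using pos P ac2 by simp
  qed
  have GL: "G L < 0"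
  proof -
    have "G L = - (c2 * (P * (c1 - a1)) * (a1 + mB * L))" unfolding G_def L_def
      by (simp add: algebra_simps)
    moreover have "c2 * (P * (c1 - a1)) * (a1 + mB * L) > 0"
      using pos P ac1 mB L by (simp add: add_pos_pos)
    ultimately show ?thesis by simp
  qed
  obtain s where s: "0 < s" "s < L" "G s = 0" and Gpos: "\<And>t. 0 \<le> t \<Longrightarrow> t < s \<Longrightarrow> G t > 0"
    and Gneg: "\<And>t. s < t \<Longrightarrow> t \<le> L \<Longrightarrow> G t < 0"
    using root_sign[OF Gk G0 GL L] by blast
  define fB where "fB t = Fb a1 a2 P t" for t
  define fC where "fC t = Fb c1 c2 P t" for t
  have diff: "fB t - fC t = G t / ((a1 + mB * t) * (c1 + mC * t))" if "t \<ge> 0" for t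
  proof -
    have "a1 + mB * t > 0" "c1 + mC * t > 0" using pos mB mC that by (simp_all add: add_pos_nonneg)
    thus ?thesis unfolding fB_def fC_def Fb_def G_def mB_def[symmetric] mC_def[symmetric]
      by (simp add: field_simps)
  qed
  have dpos: "(a1 + mB * t) * (c1 + mC * t) > 0" if "t \<ge> 0" for t
    using pos mB mC that by (simp add: add_pos_nonneg)
  have sgn_gt: "fB t > fC t \<longleftrightarrow> G t > 0" if "t \<ge> 0" for t
    using diff[OF that] dpos[OF that] by (smt (verit) divide_pos_pos zero_less_divide_iff)
  have sgn_lt: "fB t < fC t \<longleftrightarrow> G t < 0" if "t \<ge> 0" for t
    using diff[OF that] dpos[OF that] by (smt (verit) divide_neg_pos divide_less_0_iff)
  have fBnn: "fB t \<ge> 0" if "0 \<le> t" "t \<le> L" for t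
    using Fb_nonneg[of a1 a2 t P] pos that by (simp add: fB_def L_def)
  have fCnn: "fC t \<ge> 0" if "0 \<le> t" "t \<le> L" for t
  proof -
    have "t \<le> c1 * P" using that ac1 P unfolding L_def by (smt (verit) mult_strict_right_mono)
    thus ?thesis using Fb_nonneg[of c1 c2 t P] pos that by (simp add: fC_def)
  qed
  define al :: "real \<Rightarrow> real" where "al r = 2 powr r - 1" for r
  have al0: "al r \<ge> 0" if "r \<ge> 0" for r
    using that powr_le_cancel_iff[of 2 0 r] by (simp add: al_def)
  have rmaxB: "r \<le> rmax D H \<beta>0 P 1 xB \<longleftrightarrow> al r \<le> L" for r
  proof -
    have "1 + P * a1 > 0" using pos P by (simp add: add_pos_pos)
    thus ?thesis unfolding rmax_def a1_def[symmetric] al_def L_def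
      using le_log_iff[of 2 "1 + P * a1" r] by (simp add: algebra_simps)
  qed
  have bB: "boundary D H \<beta>0 P xB r = log 2 (1 + fB (al r))" if "0 \<le> r" "al r \<le> L" for r
    using bnd[OF b0 H that(1), where D=D and P=P and x=xB] that unfolding fB_def al_def a1_def a2_def L_def
    by (simp add: mult.commute)
  have bC: "boundary D H \<beta>0 P xC r = log 2 (1 + fC (al r))" if "0 \<le> r" "al r \<le> L" for r
  proof -
    have "al r \<le> c1 * P" using that ac1 P unfolding L_def by (smt (verit) mult_strict_right_mono)
    thus ?thesis
      using bnd[OF b0 H that(1), where D=D and P=P and x=xC] unfolding fC_def al_def c1_def c2_def
      by (simp add: mult.commute)
  qed
  have cmp_gt: "boundary D H \<beta>0 P xB r > boundary D H \<beta>0 P xC r \<longleftrightarrow> G (al r) > 0"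
    if "0 \<le> r" "al r \<le> L" for r
    using bB[OF that] bC[OF that] fBnn[OF al0 that(2)] fCnn[OF al0 that(2)] sgn_gt[OF al0] that
    by simp
  have cmp_lt: "boundary D H \<beta>0 P xB r < boundary D H \<beta>0 P xC r \<longleftrightarrow> G (al r) < 0"
    if "0 \<le> r" "al r \<le> L" for r
    using bB[OF that] bC[OF that] fBnn[OF al0 that(2)] fCnn[OF al0 that(2)] sgn_lt[OF al0] that
    by simp
  define r1bar where "r1bar = log 2 (1 + s)"
  have alr: "al r1bar = s" using s unfolding r1bar_def al_def by simp
  have r1pos: "r1bar > 0" using s unfolding r1bar_def by simp
  have al_less: "r < r1bar \<longleftrightarrow> al r < s" for r
  proof -
    have "r < r1bar \<longleftrightarrow> 2 powr r < 2 powr r1bar" by simp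
    also have "\<dots> \<longleftrightarrow> al r < s" using alr unfolding al_def by linarith
    finally show ?thesis .
  qed
  have r1lt: "r1bar < rmax D H \<beta>0 P 1 xB"
  proof -
    have "1 + s < 1 + P * a1" using s unfolding L_def by (simp add: mult.commute)
    moreover have "1 + s > 0" using s by simp
    ultimately show ?thesis unfolding r1bar_def rmax_def a1_def[symmetric] by simp
  qed
  define r2bar where "r2bar = boundary D H \<beta>0 P xB r1bar"
  have sL: "al r1bar \<le> L" using alr s by simp
  have eqbar: "r2bar = boundary D H \<beta>0 P xC r1bar"
    using cmp_gt[OF less_imp_le[OF r1pos] sL] cmp_lt[OF less_imp_le[OF r1pos] sL] alr s
    unfolding r2bar_def by simp
  have r2pos: "r2bar > 0"
  proof -
    have "a1 + mB * s > 0" using pos mB s by (simp add: add_pos_pos)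
    moreover have "a1 * P - s > 0" using s unfolding L_def by simp
    ultimately have "fB s > 0" unfolding fB_def Fb_def mB_def[symmetric] using pos by simp
    thus ?thesis unfolding r2bar_def using bB[OF less_imp_le[OF r1pos] sL] alr by simp
  qed
  have r2lt: "r2bar < rmax D H \<beta>0 P 2 xC"
  proof -
    have den: "c1 + mC * s > 0" using pos mC s by (simp add: add_pos_pos)
    have "c2 * (c1 * P - s) < c2 * P * (c1 + mC * s)"
    proof -
      have "c2 * s > 0" "c2 * P * (mC * s) > 0" using pos P mC s by simp_all
      thus ?thesis by (simp add: algebra_simps)
    qed
    hence "c2 * (c1 * P - s) / (c1 + mC * s) < c2 * P"
      using pos_divide_less_eq[OF den] by simp
    hence "fC s < c2 * P" unfolding fC_def Fb_def mC_def[symmetric] .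
    moreover have "fC s \<ge> 0" using fCnn s by simp
    ultimately have "log 2 (1 + fC s) < log 2 (1 + P * c2)" by (simp add: mult.commute)
    thus ?thesis unfolding eqbar bC[OF less_imp_le[OF r1pos] sL] alr rmax_def c2_def[symmetric] .
  qed
  show ?thesis
  proof (intro exI conjI allI impI)
    show "0 \<le> r1bar" using r1pos by simp
    show "r1bar \<le> rmax D H \<beta>0 P 1 xB" using r1lt by simp
    show "r2bar = boundary D H \<beta>0 P xB r1bar" by (simp add: r2bar_def)
    show "r2bar = boundary D H \<beta>0 P xC r1bar" by (rule eqbar)
    show "0 < r1bar" "r1bar < rmax D H \<beta>0 P 1 xB" "0 < r2bar" "r2bar < rmax D H \<beta>0 P 2 xC"
      by fact+
  next
    fix r assume h: "0 \<le> r \<and> r \<le> rmax D H \<beta>0 P 1 xB \<and>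
            boundary D H \<beta>0 P xB r = boundary D H \<beta>0 P xC r"
    hence aL: "al r \<le> L" using rmaxB by simp
    have "G (al r) = 0" using cmp_gt[OF _ aL] cmp_lt[OF _ aL] h by force
    have "al r = s"
    proof (cases rule: linorder_cases[of "al r" s])
      case less thus ?thesis using Gpos[OF al0 less] h \<open>G (al r) = 0\<close> by simp
    next
      case greater thus ?thesis using Gneg[OF greater aL] \<open>G (al r) = 0\<close> by simp
    qed simp
    hence "2 powr r = 2 powr r1bar" using alr unfolding al_def by simp
    thus "r = r1bar" by (simp add: powr_inj)
  next
    fix r assume h: "0 \<le> r \<and> r < r1bar"
    hence "al r < s" using al_less by simp
    hence aL: "al r \<le> L" using s by simp
    show "boundary D H \<beta>0 P xB r > boundary D H \<beta>0 P xC r"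
      using cmp_gt[OF _ aL] Gpos[OF al0 \<open>al r < s\<close>] h by simp
  next
    fix r assume h: "r1bar < r \<and> r \<le> rmax D H \<beta>0 P 1 xB"
    hence r0: "0 \<le> r" using r1pos by simp
    have aL: "al r \<le> L" using rmaxB h by simp
    have "\<not> al r < s" using al_less[of r] h by simp
    moreover have "al r \<noteq> s"
    proof
      assume "al r = s"
      hence "2 powr r = 2 powr r1bar" using alr unfolding al_def by simp
      thus False using h by (simp add: powr_inj)
    qed
    ultimately have "s < al r" by simp
    show "boundary D H \<beta>0 P xB r < boundary D H \<beta>0 P xC r"
      using cmp_lt[OF r0 aL] Gneg[OF \<open>s < al r\<close> aL] by simp
  qed
qed

end
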